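(* Let $\varphi:\Lambda\to\Gamma$ be a regular covering map of finite simplicial graphs without isolated vertices, and let $v,v'$ be vertices of $\Gamma$ with $\mathrm{lk}(v)\subseteq\mathrm{st}(v')$. Then the transvection $T^{v'}_v$ of $A_\Gamma$ sending $v$ to $vv'$ and fixing all other vertices is liftable if and only if $v\lesssim_\varphi v'$.
   Context: Graphs are finite simplicial graphs; subgraphs are induced. $A_\Gamma$ is the right-angled Artin group with generators $V\Gamma$ and relations $[u,w]=1$ for edges $\{u,w\}$. $\mathrm{lk}(v)$ is induced by the neighbours of $v$, $\mathrm{st}(v)$ by $\mathrm{lk}(v)\cup\{v\}$. A covering map $\varphi:\Lambda\to\Gamma$ is a surjective simplicial map mapping the neighbours of each vertex $u$ bijectively onto the neighbours of $\varphi(u)$; regular means the group $\mathrm{Deck}(\varphi)$ of graph automorphisms $\mu$ of $\Lambda$ with $\varphi\mu=\varphi$ acts transitively on each fiber. $\phi:A_\Lambda\to A_\Gamma$ is induced by $\varphi$; $f\in\mathrm{Aut}(A_\Gamma)$ is liftable if there is $F\in\mathrm{Aut}(A_\Lambda)$ with $f\circ\phi=\phi\circ F$. For vertices $x,y$ of $\Gamma$, $x\lesssim_\varphi y$ means: for every $u\in\varphi^{-1}(x)$ there is $u'\in\varphi^{-1}(y)$ with $\mathrm{lk}(u)\subseteq\mathrm{st}(u')$. *)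

theory Defs
  imports "HOL-Algebra.Group" "HOL-Algebra.Coset"
begin

definition simplicial_graph :: "'a set \<Rightarrow> ('a \<times> 'a) set \<Rightarrow> bool" where
  "simplicial_graph V E \<longleftrightarrow> finite V \<and> E \<subseteq> V \<times> V \<and> sym E \<and> irrefl E"

definition no_isolated_vertices :: "'a set \<Rightarrow> ('a \<times> 'a) set \<Rightarrow> bool" where
  "no_isolated_vertices V E \<longleftrightarrow> (\<forall>v\<in>V. \<exists>u. (v, u) \<in> E)"

definition lk :: "('a \<times> 'a) set \<Rightarrow> 'a \<Rightarrow> 'a set" where
  "lk E v = {u. (v, u) \<in> E}"

definition st :: "('a \<times> 'a) set \<Rightarrow> 'a \<Rightarrow> 'a set" where
  "st E v = insert v (lk E v)"

definition covering_map ::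
  "'b set \<Rightarrow> ('b \<times> 'b) set \<Rightarrow> 'a set \<Rightarrow> ('a \<times> 'a) set \<Rightarrow> ('b \<Rightarrow> 'a) \<Rightarrow> bool" where
  "covering_map VL EL VG EG \<phi> \<longleftrightarrow>
     \<phi> ` VL = VG \<and>
     (\<forall>u w. (u, w) \<in> EL \<longrightarrow> (\<phi> u, \<phi> w) \<in> EG) \<and>
     (\<forall>u\<in>VL. bij_betw \<phi> (lk EL u) (lk EG (\<phi> u)))"

definition deck ::
  "'b set \<Rightarrow> ('b \<times> 'b) set \<Rightarrow> ('b \<Rightarrow> 'a) \<Rightarrow> ('b \<Rightarrow> 'b) set" where
  "deck VL EL \<phi> = {\<mu>. bij_betw \<mu> VL VL \<and>
      (\<forall>x\<in>VL. \<forall>y\<in>VL. (x, y) \<in> EL \<longleftrightarrow> (\<mu> x, \<mu> y) \<in> EL) \<and>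
      (\<forall>x\<in>VL. \<phi> (\<mu> x) = \<phi> x)}"

definition regular_covering_map ::
  "'b set \<Rightarrow> ('b \<times> 'b) set \<Rightarrow> 'a set \<Rightarrow> ('a \<times> 'a) set \<Rightarrow> ('b \<Rightarrow> 'a) \<Rightarrow> bool" where
  "regular_covering_map VL EL VG EG \<phi> \<longleftrightarrow>
     covering_map VL EL VG EG \<phi> \<and>
     (\<forall>u\<in>VL. \<forall>u'\<in>VL. \<phi> u = \<phi> u' \<longrightarrow> (\<exists>\<mu>\<in>deck VL EL \<phi>. \<mu> u = u'))"

definition phi_le ::
  "'b set \<Rightarrow> ('b \<times> 'b) set \<Rightarrow> ('b \<Rightarrow> 'a) \<Rightarrow> 'a \<Rightarrow> 'a \<Rightarrow> bool" where
  "phi_le VL EL \<phi> x y \<longleftrightarrow>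
     (\<forall>u\<in>VL. \<phi> u = x \<longrightarrow> (\<exists>u'\<in>VL. \<phi> u' = y \<and> lk EL u \<subseteq> st EL u'))"

text \<open>Words: lists of letters (vertex, sign); sign True means the generator,
False its inverse.\<close>
type_synonym 'a word = "('a \<times> bool) list"

inductive raag_eq :: "'a set \<Rightarrow> ('a \<times> 'a) set \<Rightarrow> 'a word \<Rightarrow> 'a word \<Rightarrow> bool"
  for V E where
  refl: "w \<in> lists (V \<times> UNIV) \<Longrightarrow> raag_eq V E w w"
| sym: "raag_eq V E w w' \<Longrightarrow> raag_eq V E w' w"
| trans: "raag_eq V E w w' \<Longrightarrow> raag_eq V E w' w'' \<Longrightarrow> raag_eq V E w w''"
| cancel: "xs \<in> lists (V \<times> UNIV) \<Longrightarrow> ys \<in> lists (V \<times> UNIV) \<Longrightarrow> a \<in> V \<Longrightarrow>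
     raag_eq V E (xs @ [(a, s), (a, \<not> s)] @ ys) (xs @ ys)"
| commute: "xs \<in> lists (V \<times> UNIV) \<Longrightarrow> ys \<in> lists (V \<times> UNIV) \<Longrightarrow> (a, c) \<in> E \<Longrightarrow>
     a \<in> V \<Longrightarrow> c \<in> V \<Longrightarrow>
     raag_eq V E (xs @ [(a, s), (c, t)] @ ys) (xs @ [(c, t), (a, s)] @ ys)"

definition raag_rel :: "'a set \<Rightarrow> ('a \<times> 'a) set \<Rightarrow> ('a word \<times> 'a word) set" where
  "raag_rel V E = {(w, w'). raag_eq V E w w'}"

definition raag_class :: "'a set \<Rightarrow> ('a \<times> 'a) set \<Rightarrow> 'a word \<Rightarrow> 'a word set" where
  "raag_class V E w = raag_rel V E `` {w}"

definition rep :: "'a word set \<Rightarrow> 'a word" where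
  "rep X = (SOME w. w \<in> X)"

definition raag :: "'a set \<Rightarrow> ('a \<times> 'a) set \<Rightarrow> 'a word set monoid" where
  "raag V E = \<lparr> carrier = lists (V \<times> UNIV) // raag_rel V E,
                mult = (\<lambda>X Y. raag_class V E (rep X @ rep Y)),
                one = raag_class V E [] \<rparr>"

definition induced_hom ::
  "'a set \<Rightarrow> ('a \<times> 'a) set \<Rightarrow> ('b \<Rightarrow> 'a) \<Rightarrow> 'b word set \<Rightarrow> 'a word set" where
  "induced_hom VG EG \<phi> X = raag_class VG EG (map (\<lambda>(a, s). (\<phi> a, s)) (rep X))"

definition transvection ::
  "'a set \<Rightarrow> ('a \<times> 'a) set \<Rightarrow> 'a \<Rightarrow> 'a \<Rightarrow> 'a word set \<Rightarrow> 'a word set" where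
  "transvection V E v v' X = raag_class V E
     (concat (map (\<lambda>(a, s). if a = v then
                              (if s then [(v, True), (v', True)] else [(v', False), (v, False)])
                            else [(a, s)]) (rep X)))"

definition liftable ::
  "'b set \<Rightarrow> ('b \<times> 'b) set \<Rightarrow> 'a set \<Rightarrow> ('a \<times> 'a) set \<Rightarrow> ('b \<Rightarrow> 'a)
   \<Rightarrow> ('a word set \<Rightarrow> 'a word set) \<Rightarrow> bool" where
  "liftable VL EL VG EG \<phi> f \<longleftrightarrow>
     (\<exists>F \<in> iso (raag VL EL) (raag VL EL).
        \<forall>X \<in> carrier (raag VL EL). f (induced_hom VG EG \<phi> X) = induced_hom VG EG \<phi> (F X))"

end

theory Submission
  imports Defs
begin


definition sgnb :: "bool \<Rightarrow> int" where "sgnb s = (if s then 1 else -1)"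

definition cnt :: "'a word \<Rightarrow> 'a \<Rightarrow> int" where
  "cnt w a = sum_list (map (\<lambda>(b,s). if b = a then sgnb s else 0) w)"

lemma cnt_simps[simp]: "cnt [] a = 0" "cnt ((b,s)#w) a = (if b = a then sgnb s else 0) + cnt w a"
  "cnt (xs @ ys) a = cnt xs a + cnt ys a"
  by (auto simp: cnt_def)

fun nab :: "'a \<Rightarrow> 'a \<Rightarrow> 'a word \<Rightarrow> int" where
  "nab a b [] = 0"
| "nab a b ((c,s)#w) = (if c = a then sgnb s * cnt w b else 0) + nab a b w"

lemma nab_append[simp]: "nab a b (xs @ ys) = nab a b xs + nab a b ys + cnt xs a * cnt ys b"
  by (induction xs rule: nab.induct) (auto simp: algebra_simps)

definition winv :: "'a word \<Rightarrow> 'a word" where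
  "winv w = rev (map (\<lambda>(a,s). (a, \<not> s)) w)"

lemma winv_simps[simp]: "winv [] = []" "winv (x # w) = winv w @ [(fst x, \<not> snd x)]"
  "winv (xs @ ys) = winv ys @ winv xs" "winv (winv w) = w"
  by (auto simp: winv_def case_prod_beta rev_map[symmetric] comp_def)

lemma winv_lists[simp]: "winv w \<in> lists (V \<times> UNIV) \<longleftrightarrow> w \<in> lists (V \<times> UNIV)"
  by (auto simp: winv_def)

lemma fst_set_winv[simp]: "fst ` set (winv w) = fst ` set w"
  by (force simp: winv_def image_iff)

lemma raag_refl': "(\<forall>x\<in>set w. x \<in> V \<times> UNIV) \<Longrightarrow> raag_eq V E w w"
  by (rule raag_eq.refl) (auto simp: in_lists_conv_set)

lemma raag_refl_simp[simp]: "w \<in> lists (V \<times> UNIV) \<Longrightarrow> raag_eq V E w w"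
  by (rule raag_eq.refl)

lemma raag_eq_lists: "raag_eq V E w w' \<Longrightarrow> w \<in> lists (V \<times> UNIV) \<and> w' \<in> lists (V \<times> UNIV)"
  by (induction rule: raag_eq.induct) auto

lemma raag_eq_ctx: "raag_eq V E w w' \<Longrightarrow> xs \<in> lists (V \<times> UNIV) \<Longrightarrow> ys \<in> lists (V \<times> UNIV)
   \<Longrightarrow> raag_eq V E (xs @ w @ ys) (xs @ w' @ ys)"
proof (induction rule: raag_eq.induct)
  case (refl w) thus ?case by simp
next
  case (sym w w') thus ?case by (auto intro: raag_eq.sym)
next
  case (trans w w' w'') thus ?case by (meson raag_eq.trans)
next
  case (cancel as bs a s)
  have "raag_eq V E ((xs @ as) @ [(a, s), (a, \<not> s)] @ (bs @ ys)) ((xs @ as) @ (bs @ ys))"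
    by (rule raag_eq.cancel) (use cancel in auto)
  thus ?case by simp
next
  case (commute as bs a c s t)
  have "raag_eq V E ((xs @ as) @ [(a, s), (c, t)] @ (bs @ ys)) ((xs @ as) @ [(c, t), (a, s)] @ (bs @ ys))"
    by (rule raag_eq.commute) (use commute in auto)
  thus ?case by simp
qed

lemma raag_eq_app: "raag_eq V E a a' \<Longrightarrow> raag_eq V E b b' \<Longrightarrow> raag_eq V E (a @ b) (a' @ b')"
proof -
  assume 1: "raag_eq V E a a'" and 2: "raag_eq V E b b'"
  have "raag_eq V E ([] @ a @ b) ([] @ a' @ b)"
    using raag_eq_ctx[OF 1, of "[]" b] raag_eq_lists[OF 2] by auto
  moreover have "raag_eq V E (a' @ b @ []) (a' @ b' @ [])"
    using raag_eq_ctx[OF 2, of a' "[]"] raag_eq_lists[OF 1] by auto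
  ultimately show ?thesis by (auto intro: raag_eq.trans)
qed

lemma cancel_inv: "w \<in> lists (V \<times> UNIV) \<Longrightarrow> xs \<in> lists (V \<times> UNIV) \<Longrightarrow> ys \<in> lists (V \<times> UNIV)
  \<Longrightarrow> raag_eq V E (xs @ w @ winv w @ ys) (xs @ ys)"
proof (induction w arbitrary: xs ys)
  case Nil thus ?case by auto
next
  case (Cons l w)
  obtain a s where l: "l = (a,s)" by fastforce
  have 1: "raag_eq V E ((xs @ [(a,s)]) @ w @ winv w @ ([(a, \<not> s)] @ ys)) ((xs @ [(a,s)]) @ ([(a, \<not> s)] @ ys))"
    by (rule Cons.IH) (use Cons l in auto)
  have 2: "raag_eq V E (xs @ [(a,s), (a, \<not> s)] @ ys) (xs @ ys)"
    by (rule raag_eq.cancel) (use Cons l in auto)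
  show ?case using raag_eq.trans[OF 1] 2 l by simp
qed

lemma cancel_inv': "w \<in> lists (V \<times> UNIV) \<Longrightarrow> xs \<in> lists (V \<times> UNIV) \<Longrightarrow> ys \<in> lists (V \<times> UNIV)
  \<Longrightarrow> raag_eq V E (xs @ winv w @ w @ ys) (xs @ ys)"
  using cancel_inv[of "winv w" V xs ys E] by simp

lemma swap_letter: "xs \<in> lists (V \<times> UNIV) \<Longrightarrow> ys \<in> lists (V \<times> UNIV) \<Longrightarrow> a \<in> V \<Longrightarrow> c \<in> V \<Longrightarrow>
  a = c \<or> (a, c) \<in> E \<Longrightarrow> raag_eq V E (xs @ [(a,s),(c,t)] @ ys) (xs @ [(c,t),(a,s)] @ ys)"
proof (cases "a = c")
  case True
  assume h: "xs \<in> lists (V \<times> UNIV)" "ys \<in> lists (V \<times> UNIV)" "a \<in> V" "c \<in> V"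
  show ?thesis
  proof (cases "s = t")
    case True thus ?thesis using h \<open>a = c\<close> by auto
  next
    case False
    hence t: "t = (\<not> s)" by auto
    have 1: "raag_eq V E (xs @ [(a,s),(a,\<not>s)] @ ys) (xs @ ys)" by (rule raag_eq.cancel) (use h in auto)
    have 2: "raag_eq V E (xs @ [(a,\<not>s),(a,\<not>\<not>s)] @ ys) (xs @ ys)" by (rule raag_eq.cancel) (use h in auto)
    show ?thesis using 1 2 t \<open>a = c\<close> by (auto intro: raag_eq.trans raag_eq.sym)
  qed
next
  case False
  assume h: "xs \<in> lists (V \<times> UNIV)" "ys \<in> lists (V \<times> UNIV)" "a \<in> V" "c \<in> V" "a = c \<or> (a, c) \<in> E"
  show ?thesis by (rule raag_eq.commute) (use h False in auto)
qed

definition commw :: "('a \<times> 'a) set \<Rightarrow> 'a set \<Rightarrow> 'a set \<Rightarrow> bool" where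
  "commw E A B \<longleftrightarrow> (\<forall>a\<in>A. \<forall>b\<in>B. a = b \<or> (a, b) \<in> E)"

lemma swap_one: "q \<in> lists (V \<times> UNIV) \<Longrightarrow> xs \<in> lists (V \<times> UNIV) \<Longrightarrow> ys \<in> lists (V \<times> UNIV) \<Longrightarrow>
  fst l \<in> V \<Longrightarrow> commw E {fst l} (fst ` set q) \<Longrightarrow> raag_eq V E (xs @ [l] @ q @ ys) (xs @ q @ [l] @ ys)"
proof (induction q arbitrary: xs)
  case Nil thus ?case by (auto simp: mem_Times_iff)
next
  case (Cons m q)
  obtain a s where l: "l = (a,s)" by fastforce
  obtain c t where m: "m = (c,t)" by fastforce
  have 1: "raag_eq V E (xs @ [(a,s),(c,t)] @ (q @ ys)) (xs @ [(c,t),(a,s)] @ (q @ ys))"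
    by (rule swap_letter) (use Cons l m in \<open>auto simp: commw_def\<close>)
  have 2: "raag_eq V E ((xs @ [m]) @ [l] @ q @ ys) ((xs @ [m]) @ q @ [l] @ ys)"
    by (rule Cons.IH) (use Cons in \<open>auto simp: commw_def\<close>)
  show ?case using 1 2 l m by (auto intro: raag_eq.trans)
qed

lemma swap_block: "p \<in> lists (V \<times> UNIV) \<Longrightarrow> q \<in> lists (V \<times> UNIV) \<Longrightarrow> xs \<in> lists (V \<times> UNIV) \<Longrightarrow> ys \<in> lists (V \<times> UNIV) \<Longrightarrow>
  commw E (fst ` set p) (fst ` set q) \<Longrightarrow> raag_eq V E (xs @ p @ q @ ys) (xs @ q @ p @ ys)"
proof (induction p arbitrary: xs)
  case Nil thus ?case by (auto simp: mem_Times_iff)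
next
  case (Cons l p)
  have 1: "raag_eq V E ((xs @ [l]) @ p @ q @ ys) ((xs @ [l]) @ q @ p @ ys)"
    by (rule Cons.IH) (use Cons in \<open>auto simp: commw_def\<close>)
  have 2: "raag_eq V E (xs @ [l] @ q @ (p @ ys)) (xs @ q @ [l] @ (p @ ys))"
    by (rule swap_one) (use Cons in \<open>auto simp: commw_def\<close>)
  show ?case using 1 2 by (auto intro: raag_eq.trans)
qed



definition rho :: "('b \<Rightarrow> 'a word) \<Rightarrow> ('b \<times> bool) \<Rightarrow> 'a word" where
  "rho \<sigma> l = (if snd l then \<sigma> (fst l) else winv (\<sigma> (fst l)))"

definition subst :: "('b \<Rightarrow> 'a word) \<Rightarrow> 'b word \<Rightarrow> 'a word" where
  "subst \<sigma> w = concat (map (rho \<sigma>) w)"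

lemma subst_simps[simp]: "subst \<sigma> [] = []" "subst \<sigma> (l # w) = rho \<sigma> l @ subst \<sigma> w"
  "subst \<sigma> (xs @ ys) = subst \<sigma> xs @ subst \<sigma> ys"
  by (auto simp: subst_def)

lemma rho_lists: "\<forall>a\<in>V. \<sigma> a \<in> lists (V' \<times> UNIV) \<Longrightarrow> fst l \<in> V \<Longrightarrow> rho \<sigma> l \<in> lists (V' \<times> UNIV)"
  by (auto simp: rho_def simp del: in_listsI)

lemma subst_lists: "\<forall>a\<in>V. \<sigma> a \<in> lists (V' \<times> UNIV) \<Longrightarrow> w \<in> lists (V \<times> UNIV) \<Longrightarrow> subst \<sigma> w \<in> lists (V' \<times> UNIV)"
proof (induction w)
  case Nil thus ?case by simp
next
  case (Cons l w)
  thus ?case using rho_lists[OF Cons.prems(1), of l] by (auto simp del: in_listsI)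
qed

lemma subst_winv: "subst \<sigma> (winv p) = winv (subst \<sigma> p)"
  by (induction p) (auto simp: rho_def)

lemma fst_set_rho[simp]: "fst ` set (rho \<sigma> l) = fst ` set (\<sigma> (fst l))"
  by (auto simp: rho_def)

lemma winv_resp: "raag_eq V E p q \<Longrightarrow> raag_eq V E (winv p) (winv q)"
proof -
  assume h: "raag_eq V E p q"
  have p: "p \<in> lists (V \<times> UNIV)" and q: "q \<in> lists (V \<times> UNIV)" using raag_eq_lists[OF h] by auto
  have 1: "raag_eq V E (winv p @ q @ winv q @ []) (winv p @ [])"
    by (rule cancel_inv) (use p q in auto)
  have qw: "winv q \<in> lists (V \<times> UNIV)" using q by simp
  have pw: "winv p \<in> lists (V \<times> UNIV)" using p by simp
  have 5: "raag_eq V E (q @ winv q) (p @ winv q)"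
    by (rule raag_eq_app[OF raag_eq.sym[OF h] raag_eq.refl[OF qw]])
  have 2: "raag_eq V E (winv p @ (q @ winv q)) (winv p @ (p @ winv q))"
    by (rule raag_eq_app[OF raag_eq.refl[OF pw] 5])
  have 3: "raag_eq V E ([] @ p @ winv p @ winv q) ([] @ winv q)"
    by (rule cancel_inv) (use p q in auto)
  have 4: "raag_eq V E ([] @ winv p @ p @ winv q) ([] @ winv q)"
    by (rule cancel_inv') (use p q in auto)
  show ?thesis using 1 2 4 by simp (meson raag_eq.sym raag_eq.trans)
qed

lemma subst_resp:
  assumes l: "\<forall>a\<in>V. \<sigma> a \<in> lists (V' \<times> UNIV)"
    and c: "\<forall>a c. (a,c) \<in> E \<longrightarrow> a \<in> V \<longrightarrow> c \<in> V \<longrightarrow> commw E' (fst ` set (\<sigma> a)) (fst ` set (\<sigma> c))"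
  shows "raag_eq V E w w' \<Longrightarrow> raag_eq V' E' (subst \<sigma> w) (subst \<sigma> w')"
proof (induction rule: raag_eq.induct)
  case (refl w) thus ?case using subst_lists[OF l] by simp
next
  case (sym w w') show ?case by (rule raag_eq.sym[OF sym.IH])
next
  case (trans w w' w'') show ?case by (rule raag_eq.trans[OF trans.IH(1) trans.IH(2)])
next
  case (cancel xs ys a s)
  have xs: "subst \<sigma> xs \<in> lists (V' \<times> UNIV)" and ys: "subst \<sigma> ys \<in> lists (V' \<times> UNIV)"
    using subst_lists[OF l] cancel by auto
  have sa: "\<sigma> a \<in> lists (V' \<times> UNIV)" using l cancel by auto
  show ?case
  proof (cases s)
    case True thus ?thesis using cancel_inv[OF sa xs ys] by (simp add: rho_def)
  next
    case False thus ?thesis using cancel_inv'[OF sa xs ys] by (simp add: rho_def)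
  qed
next
  case (commute xs ys a c s t)
  have xs: "subst \<sigma> xs \<in> lists (V' \<times> UNIV)" and ys: "subst \<sigma> ys \<in> lists (V' \<times> UNIV)"
    using subst_lists[OF l] commute by auto
  have p: "rho \<sigma> (a,s) \<in> lists (V' \<times> UNIV)" and q: "rho \<sigma> (c,t) \<in> lists (V' \<times> UNIV)"
    using rho_lists[OF l] commute by auto
  have "raag_eq V' E' (subst \<sigma> xs @ rho \<sigma> (a,s) @ rho \<sigma> (c,t) @ subst \<sigma> ys)
          (subst \<sigma> xs @ rho \<sigma> (c,t) @ rho \<sigma> (a,s) @ subst \<sigma> ys)"
    by (rule swap_block[OF p q xs ys]) (use c commute in auto)
  thus ?case by simp
qed

lemma subst_comp: "subst \<tau> (subst \<sigma> w) = subst (\<lambda>a. subst \<tau> (\<sigma> a)) w"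
  by (induction w) (auto simp: rho_def subst_winv)

lemma subst_cong: "(\<forall>a\<in>fst ` set w. \<sigma> a = \<sigma>' a) \<Longrightarrow> subst \<sigma> w = subst \<sigma>' w"
  by (induction w) (auto simp: rho_def)

lemma subst_id:
  assumes "\<forall>a\<in>V. raag_eq V E (\<tau> a) [(a,True)]"
  shows "w \<in> lists (V \<times> UNIV) \<Longrightarrow> raag_eq V E (subst \<tau> w) w"
proof (induction w)
  case Nil thus ?case by simp
next
  case (Cons l w)
  obtain a s where l: "l = (a,s)" by fastforce
  have a: "a \<in> V" using Cons l by auto
  have "raag_eq V E (rho \<tau> l) [l]"
  proof (cases s)
    case True thus ?thesis using assms a l by (simp add: rho_def)
  next
    case False thus ?thesis using winv_resp[of V E "\<tau> a" "[(a,True)]"] assms a l by (simp add: rho_def)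
  qed
  hence "raag_eq V E (rho \<tau> l @ subst \<tau> w) ([l] @ w)" using Cons by (intro raag_eq_app) auto
  thus ?case by simp
qed

lemma raag_class_eq_set: "raag_class V E w = {w'. raag_eq V E w w'}"
  by (auto simp: raag_class_def raag_rel_def)

lemma class_eq: "raag_eq V E w w' \<Longrightarrow> raag_class V E w = raag_class V E w'"
  unfolding raag_class_eq_set by (rule Collect_cong) (meson raag_eq.sym raag_eq.trans)

lemma rep_class: "w \<in> lists (V \<times> UNIV) \<Longrightarrow> raag_eq V E w (rep (raag_class V E w))"
proof -
  assume "w \<in> lists (V \<times> UNIV)"
  hence "w \<in> raag_class V E w" by (simp add: raag_class_eq_set)
  hence "rep (raag_class V E w) \<in> raag_class V E w" unfolding rep_def by (rule someI)
  thus ?thesis by (simp add: raag_class_eq_set)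
qed

lemma class_eq_iff: "w \<in> lists (V \<times> UNIV) \<Longrightarrow> raag_class V E w = raag_class V E w' \<longleftrightarrow> raag_eq V E w w'"
proof
  assume a: "w \<in> lists (V \<times> UNIV)" and b: "raag_class V E w = raag_class V E w'"
  have "w \<in> raag_class V E w" using a by (simp add: raag_class_eq_set)
  hence "w \<in> raag_class V E w'" by (simp only: b)
  hence "raag_eq V E w' w" by (simp add: raag_class_eq_set)
  thus "raag_eq V E w w'" by (rule raag_eq.sym)
qed (rule class_eq)

lemma carrier_raag: "carrier (raag V E) = {raag_class V E w | w. w \<in> lists (V \<times> UNIV)}"
  by (auto simp: raag_def quotient_def raag_class_def)

lemma class_carrier: "w \<in> lists (V \<times> UNIV) \<Longrightarrow> raag_class V E w \<in> carrier (raag V E)"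
  unfolding carrier_raag by blast

lemma carrier_rep: "X \<in> carrier (raag V E) \<Longrightarrow> rep X \<in> lists (V \<times> UNIV) \<and> raag_class V E (rep X) = X"
proof -
  assume "X \<in> carrier (raag V E)"
  then obtain w where w: "w \<in> lists (V \<times> UNIV)" "X = raag_class V E w" by (auto simp: carrier_raag)
  have r: "raag_eq V E w (rep X)" using rep_class[OF w(1), of E] unfolding w(2)[symmetric] .
  have "raag_class V E (rep X) = X" using class_eq[OF r] w(2) by metis
  thus ?thesis using raag_eq_lists[OF r] by blast
qed

lemma mult_class: "w \<in> lists (V \<times> UNIV) \<Longrightarrow> w' \<in> lists (V \<times> UNIV) \<Longrightarrow>
  raag_class V E w \<otimes>\<^bsub>raag V E\<^esub> raag_class V E w' = raag_class V E (w @ w')"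
proof -
  assume w: "w \<in> lists (V \<times> UNIV)" and w': "w' \<in> lists (V \<times> UNIV)"
  have "raag_eq V E (rep (raag_class V E w) @ rep (raag_class V E w')) (w @ w')"
    using rep_class[OF w, of E] rep_class[OF w', of E] by (intro raag_eq_app) (auto intro: raag_eq.sym)
  hence "raag_class V E (rep (raag_class V E w) @ rep (raag_class V E w')) = raag_class V E (w @ w')" by (rule class_eq)
  thus ?thesis by (simp add: raag_def)
qed

definition substH :: "'a set \<Rightarrow> ('a \<times> 'a) set \<Rightarrow> ('b \<Rightarrow> 'a word) \<Rightarrow> 'b word set \<Rightarrow> 'a word set" where
  "substH V' E' \<sigma> X = raag_class V' E' (subst \<sigma> (rep X))"

locale substloc =
  fixes V :: "'b set" and E and V' :: "'a set" and E' and \<sigma> :: "'b \<Rightarrow> 'a word"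
  assumes l: "\<forall>a\<in>V. \<sigma> a \<in> lists (V' \<times> UNIV)"
    and c: "\<forall>a c. (a,c) \<in> E \<longrightarrow> a \<in> V \<longrightarrow> c \<in> V \<longrightarrow> commw E' (fst ` set (\<sigma> a)) (fst ` set (\<sigma> c))"
begin

lemma resp: "raag_eq V E w w' \<Longrightarrow> raag_eq V' E' (subst \<sigma> w) (subst \<sigma> w')"
  by (rule subst_resp[OF l c])

lemma H_class: "w \<in> lists (V \<times> UNIV) \<Longrightarrow> substH V' E' \<sigma> (raag_class V E w) = raag_class V' E' (subst \<sigma> w)"
proof -
  assume w: "w \<in> lists (V \<times> UNIV)"
  show ?thesis unfolding substH_def by (rule class_eq[OF raag_eq.sym[OF resp[OF rep_class[OF w, of E]]]])
qed

lemma H_carrier: "X \<in> carrier (raag V E) \<Longrightarrow> substH V' E' \<sigma> X \<in> carrier (raag V' E')"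
proof -
  assume "X \<in> carrier (raag V E)"
  hence "rep X \<in> lists (V \<times> UNIV)" using carrier_rep by blast
  hence "subst \<sigma> (rep X) \<in> lists (V' \<times> UNIV)" by (rule subst_lists[OF l])
  thus ?thesis unfolding substH_def by (rule class_carrier)
qed

lemma H_hom: "substH V' E' \<sigma> \<in> hom (raag V E) (raag V' E')"
proof (rule homI)
  fix X assume "X \<in> carrier (raag V E)" thus "substH V' E' \<sigma> X \<in> carrier (raag V' E')" by (rule H_carrier)
next
  fix X Y assume X: "X \<in> carrier (raag V E)" and Y: "Y \<in> carrier (raag V E)"
  obtain x y where x: "x \<in> lists (V \<times> UNIV)" "X = raag_class V E x" and y: "y \<in> lists (V \<times> UNIV)" "Y = raag_class V E y"
    using X Y unfolding carrier_raag by blast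
  show "substH V' E' \<sigma> (X \<otimes>\<^bsub>raag V E\<^esub> Y) = substH V' E' \<sigma> X \<otimes>\<^bsub>raag V' E'\<^esub> substH V' E' \<sigma> Y"
    using x y by (simp only: mult_class H_class subst_lists[OF l] subst_simps append_in_lists_conv)
qed

end



lemma cnt_resp: "raag_eq V E w w' \<Longrightarrow> cnt w a = cnt w' a"
  by (induction rule: raag_eq.induct) (auto simp: sgnb_def)

lemma nab_resp:
  assumes "a \<noteq> b" "(a,b) \<notin> E" "(b,a) \<notin> E"
  shows "raag_eq V E w w' \<Longrightarrow> nab a b w = nab a b w'"
proof (induction rule: raag_eq.induct)
  case (cancel xs ys c s)
  thus ?case using assms by (auto simp: sgnb_def)
next
  case (commute xs ys c d s t)
  thus ?case using assms by (auto simp: algebra_simps)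
qed auto

lemma comm_count:
  assumes "raag_eq V E (p @ q) (q @ p)" "a \<noteq> b" "(a,b) \<notin> E" "sym E"
  shows "cnt p a * cnt q b = cnt q a * cnt p b"
proof -
  have "(b,a) \<notin> E" using assms(3,4) by (meson symD)
  hence "nab a b (p @ q) = nab a b (q @ p)" using nab_resp[OF assms(2,3)] assms(1) by blast
  thus ?thesis by simp
qed

lemma sum_nz_ex: "sum f S \<noteq> (0::int) \<Longrightarrow> \<exists>a\<in>S. f a \<noteq> 0"
  by (meson sum.neutral)

lemma key:
  fixes x :: "'b \<Rightarrow> int" and Y :: "'b \<Rightarrow> 'b \<Rightarrow> int" and \<phi> :: "'b \<Rightarrow> 'a"
  assumes fin: "finite VL" and irr: "irrefl EG"
    and edge: "\<forall>a b. (a, b) \<in> EL \<longrightarrow> (\<phi> a, \<phi> b) \<in> EG"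
    and bij: "\<forall>a\<in>VL. bij_betw \<phi> (lk EL a) (lk EG (\<phi> a))"
    and ELV: "EL \<subseteq> VL \<times> VL"
    and u: "u \<in> VL" "\<phi> u = v" and vv: "v \<noteq> v'"
    and hx: "(\<Sum>a\<in>{a\<in>VL. \<phi> a = v}. x a) = 1" "(\<Sum>a\<in>{a\<in>VL. \<phi> a = v'}. x a) = 1"
    and hy: "\<forall>w\<in>lk EL u. \<forall>t. (\<Sum>a\<in>{a\<in>VL. \<phi> a = t}. Y w a) = (if t = \<phi> w then 1 else 0)"
    and hc: "\<forall>w\<in>lk EL u. \<forall>a b. a \<noteq> b \<longrightarrow> (a, b) \<notin> EL \<longrightarrow> x a * Y w b = Y w a * x b"
  shows "\<exists>u0\<in>VL. \<exists>u1\<in>VL. \<phi> u0 = v \<and> \<phi> u1 = v' \<and> lk EL u0 \<subseteq> st EL u1"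
proof -
  have finS: "\<And>t. finite {a\<in>VL. \<phi> a = t}" using fin by simp
  obtain u0 where u0: "u0 \<in> VL" "\<phi> u0 = v" "x u0 \<noteq> 0"
  proof -
    have "\<exists>a\<in>{a\<in>VL. \<phi> a = v}. x a \<noteq> 0"
      using hx(1) by (intro sum_nz_ex) simp
    thus ?thesis using that by auto
  qed
  obtain u1 where u1: "u1 \<in> VL" "\<phi> u1 = v'" "x u1 \<noteq> 0"
  proof -
    have "\<exists>a\<in>{a\<in>VL. \<phi> a = v'}. x a \<noteq> 0"
      using hx(2) by (intro sum_nz_ex) simp
    thus ?thesis using that by auto
  qed
  have inj0: "inj_on \<phi> (lk EL u0)" using bij u0 by (auto simp: bij_betw_def)
  have noedge_v: "\<And>a. \<phi> a = v \<Longrightarrow> (u0, a) \<notin> EL"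
  proof
    fix a assume "\<phi> a = v" "(u0, a) \<in> EL"
    hence "(v, v) \<in> EG" using edge u0 by force
    thus False using irr by (auto simp: irrefl_def)
  qed
  have main: "\<exists>c\<in>lk EL u0. \<phi> c = \<phi> w \<and> c \<in> st EL u1" if w: "w \<in> lk EL u" for w
  proof -
    define y where "y = Y w"
    have hcw: "\<And>a b. a \<noteq> b \<Longrightarrow> (a, b) \<notin> EL \<Longrightarrow> x a * y b = y a * x b" using hc w y_def by blast
    have hyw: "\<And>t. (\<Sum>a\<in>{a\<in>VL. \<phi> a = t}. y a) = (if t = \<phi> w then 1 else 0)" using hy w y_def by blast
    have "(\<phi> u, \<phi> w) \<in> EG" using w edge by (auto simp: lk_def)
    hence wv: "\<phi> w \<noteq> v" using irr u by (auto simp: irrefl_def)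
    have "(\<Sum>a\<in>{a\<in>VL. \<phi> a = v}. x u0 * y a - y u0 * x a) = 0"
    proof (rule sum.neutral, rule ballI)
      fix a assume a: "a \<in> {a\<in>VL. \<phi> a = v}"
      show "x u0 * y a - y u0 * x a = 0"
      proof (cases "a = u0")
        case False thus ?thesis using hcw[OF False[symmetric] noedge_v] a by auto
      qed simp
    qed
    moreover have "(\<Sum>a\<in>{a\<in>VL. \<phi> a = v}. x u0 * y a - y u0 * x a) = x u0 * (\<Sum>a\<in>{a\<in>VL. \<phi> a = v}. y a) - y u0 * (\<Sum>a\<in>{a\<in>VL. \<phi> a = v}. x a)"
      by (simp add: sum_subtractf sum_distrib_left)
    ultimately have yu0: "y u0 = 0" using hyw[of v] hx(1) wv by simp
    have supp: "(u0, a) \<in> EL" if "y a \<noteq> 0" for a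
    proof (rule ccontr)
      assume n: "(u0, a) \<notin> EL"
      have "a \<noteq> u0" using that yu0 by auto
      hence "x u0 * y a = y u0 * x a" using hcw[of u0 a] n by simp
      thus False using yu0 u0(3) that by simp
    qed
    obtain c where c: "c \<in> VL" "\<phi> c = \<phi> w" "y c \<noteq> 0"
    proof -
      have "\<exists>a\<in>{a\<in>VL. \<phi> a = \<phi> w}. y a \<noteq> 0"
        using hyw[of "\<phi> w"] by (intro sum_nz_ex) simp
      thus ?thesis using that by auto
    qed
    have clk: "c \<in> lk EL u0" using supp[OF c(3)] by (simp add: lk_def)
    have "c \<in> st EL u1"
    proof (rule ccontr)
      assume ns: "c \<notin> st EL u1"
      hence cu1: "c \<noteq> u1" "(u1, c) \<notin> EL" by (auto simp: st_def lk_def)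
      have yu1: "y u1 = 0"
      proof (rule ccontr)
        assume nz: "y u1 \<noteq> 0"
        hence u1lk: "u1 \<in> lk EL u0" using supp by (simp add: lk_def)
        show False
        proof (cases "\<phi> w = v'")
          case True
          hence "\<phi> c = \<phi> u1" using c(2) u1(2) by simp
          hence "c = u1" using inj0 clk u1lk by (meson inj_onD)
          thus False using cu1 by simp
        next
          case False
          have "sum y {u1} = (\<Sum>a\<in>{a\<in>VL. \<phi> a = v'}. y a)"
          proof (rule sum.mono_neutral_left)
            show "finite {a\<in>VL. \<phi> a = v'}" using finS by simp
            show "{u1} \<subseteq> {a\<in>VL. \<phi> a = v'}" using u1 by simp
            show "\<forall>a\<in>{a\<in>VL. \<phi> a = v'} - {u1}. y a = 0"
            proof (rule ballI, rule ccontr)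
              fix a assume a: "a \<in> {a\<in>VL. \<phi> a = v'} - {u1}" and "y a \<noteq> 0"
              hence "a \<in> lk EL u0" using supp by (simp add: lk_def)
              moreover have "\<phi> a = \<phi> u1" using a u1(2) by simp
              ultimately have "a = u1" using inj0 u1lk by (meson inj_onD)
              thus False using a by simp
            qed
          qed
          hence "(\<Sum>a\<in>{a\<in>VL. \<phi> a = v'}. y a) = y u1" by simp
          thus False using hyw[of v'] False nz by simp
        qed
      qed
      have "u1 \<noteq> c" using cu1(1) by simp
      hence "x u1 * y c = y u1 * x c" using hcw[of u1 c] cu1(2) by simp
      thus False using yu1 u1(3) c(3) by simp
    qed
    thus ?thesis using clk c(2) by blast
  qed
  have "lk EL u0 \<subseteq> st EL u1"
  proof
    fix c' assume c': "c' \<in> lk EL u0"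
    have "\<phi> c' \<in> lk EG (\<phi> u)" using c' edge u0 u by (auto simp: lk_def)
    moreover have "\<phi> ` lk EL u = lk EG (\<phi> u)" using bij u(1) by (simp add: bij_betw_def)
    ultimately obtain w where w: "w \<in> lk EL u" "\<phi> w = \<phi> c'"
      by (metis imageE)
    obtain c where c: "c \<in> lk EL u0" "\<phi> c = \<phi> w" "c \<in> st EL u1" using main[OF w(1)] by blast
    have "c = c'" using inj0 c c' w(2) by (auto dest: inj_onD)
    thus "c' \<in> st EL u1" using c by simp
  qed
  thus ?thesis using u0 u1 by blast
qed



lemma induced_subst: "induced_hom VG EG \<phi> X = substH VG EG (\<lambda>a. [(\<phi> a, True)]) X"
proof -
  have "map (\<lambda>(a, s). (\<phi> a, s)) w = subst (\<lambda>a. [(\<phi> a, True)]) w" for w :: "'b word"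
    by (induction w) (auto simp: rho_def)
  thus ?thesis by (simp add: induced_hom_def substH_def)
qed

lemma transv_subst: "transvection V E v v' X =
  substH V E (\<lambda>a. if a = v then [(v,True),(v',True)] else [(a,True)]) X"
proof -
  have "concat (map (\<lambda>(a, s). if a = v then
                              (if s then [(v, True), (v', True)] else [(v', False), (v, False)])
                            else [(a, s)]) w) = subst (\<lambda>a. if a = v then [(v,True),(v',True)] else [(a,True)]) w" for w
    by (induction w) (auto simp: rho_def)
  thus ?thesis by (simp add: transvection_def substH_def)
qed

lemma deck_transfer:
  assumes ELV: "EL \<subseteq> VL \<times> VL" and reg: "regular_covering_map VL EL VG EG \<phi>"
    and u0: "u0 \<in> VL" and u1: "u1 \<in> VL" and sub: "lk EL u0 \<subseteq> st EL u1"
    and u: "u \<in> VL" "\<phi> u = \<phi> u0"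
  shows "\<exists>u'\<in>VL. \<phi> u' = \<phi> u1 \<and> lk EL u \<subseteq> st EL u'"
proof -
  obtain \<mu> where \<mu>: "\<mu> \<in> deck VL EL \<phi>" "\<mu> u0 = u"
    using reg u0 u unfolding regular_covering_map_def by metis
  have bij: "bij_betw \<mu> VL VL" and ed: "\<forall>x\<in>VL. \<forall>y\<in>VL. (x, y) \<in> EL \<longleftrightarrow> (\<mu> x, \<mu> y) \<in> EL"
    and ph: "\<forall>x\<in>VL. \<phi> (\<mu> x) = \<phi> x" using \<mu>(1) by (auto simp: deck_def)
  have "\<mu> u1 \<in> VL" using bij u1 by (auto simp: bij_betw_def)
  moreover have "\<phi> (\<mu> u1) = \<phi> u1" using ph u1 by auto
  moreover have "lk EL u \<subseteq> st EL (\<mu> u1)"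
  proof
    fix c assume c: "c \<in> lk EL u"
    hence ce: "(\<mu> u0, c) \<in> EL" using \<mu>(2) by (simp add: lk_def)
    hence "c \<in> VL" using ELV by auto
    then obtain c0 where c0: "c0 \<in> VL" "c = \<mu> c0" using bij by (auto simp: bij_betw_def)
    have "(u0, c0) \<in> EL" using ed u0 c0 ce by auto
    hence "c0 \<in> st EL u1" using sub by (auto simp: lk_def)
    hence "c0 = u1 \<or> (u1, c0) \<in> EL" by (auto simp: st_def lk_def)
    thus "c \<in> st EL (\<mu> u1)"
    proof
      assume "c0 = u1" thus ?thesis using c0 by (simp add: st_def)
    next
      assume "(u1, c0) \<in> EL" hence "(\<mu> u1, \<mu> c0) \<in> EL" using ed u1 c0 by auto
      thus ?thesis using c0 by (simp add: st_def lk_def)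
    qed
  qed
  ultimately show ?thesis by blast
qed


lemma cnt_push:
  assumes "finite VL"
  shows "p \<in> lists (VL \<times> UNIV) \<Longrightarrow> cnt (subst (\<lambda>a. [(\<phi> a, True)]) p) t = (\<Sum>b\<in>{b\<in>VL. \<phi> b = t}. cnt p b)"
proof (induction p)
  case Nil thus ?case by simp
next
  case (Cons l p)
  obtain a s where l: "l = (a, s)" by fastforce
  have a: "a \<in> VL" using Cons l by auto
  have "(\<Sum>b\<in>{b\<in>VL. \<phi> b = t}. cnt (l # p) b) =
        (\<Sum>b\<in>{b\<in>VL. \<phi> b = t}. (if a = b then sgnb s else 0)) + (\<Sum>b\<in>{b\<in>VL. \<phi> b = t}. cnt p b)"
    using l by (simp add: sum.distrib)
  also have "(\<Sum>b\<in>{b\<in>VL. \<phi> b = t}. (if a = b then sgnb s else 0)) = (if \<phi> a = t then sgnb s else 0)"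
    using a assms by (simp add: sum.delta)
  finally show ?case using Cons l by (simp add: rho_def sgnb_def)
qed

lemma phi_loc:
  assumes "covering_map VL EL VG EG \<phi>"
  shows "substloc VL EL VG EG (\<lambda>a. [(\<phi> a, True)])"
  using assms by unfold_locales (auto simp: covering_map_def commw_def)

lemma tau_loc:
  assumes "sym EG" "irrefl EG" "v \<in> VG" "v' \<in> VG" "lk EG v \<subseteq> st EG v'"
  shows "substloc VG EG VG EG (\<lambda>a. if a = v then [(v,True),(v',True)] else [(a,True)])"
proof
  show "\<forall>a\<in>VG. (if a = v then [(v,True),(v',True)] else [(a,True)]) \<in> lists (VG \<times> UNIV)"
    using assms by auto
  show "\<forall>a c. (a, c) \<in> EG \<longrightarrow> a \<in> VG \<longrightarrow> c \<in> VG \<longrightarrow>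
     commw EG (fst ` set (if a = v then [(v,True),(v',True)] else [(a,True)]))
              (fst ` set (if c = v then [(v,True),(v',True)] else [(c,True)]))"
  proof (intro allI impI)
    fix a c assume ac: "(a, c) \<in> EG" "a \<in> VG" "c \<in> VG"
    have ca: "(c, a) \<in> EG" using ac assms(1) by (meson symD)
    have nac: "a \<noteq> c" using ac assms(2) by (auto simp: irrefl_def)
    show "commw EG (fst ` set (if a = v then [(v,True),(v',True)] else [(a,True)]))
              (fst ` set (if c = v then [(v,True),(v',True)] else [(c,True)]))"
    proof (cases "a = v")
      case True
      hence "c \<noteq> v" using nac by simp
      moreover have "c = v' \<or> (v', c) \<in> EG" using assms(5) ac True by (auto simp: lk_def st_def)
      ultimately show ?thesis using True ac by (auto simp: commw_def)
    next
      case False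
      show ?thesis
      proof (cases "c = v")
        case True
        have "a = v' \<or> (v', a) \<in> EG" using assms(5) ca True by (auto simp: lk_def st_def)
        hence "a = v' \<or> (a, v') \<in> EG" using assms(1) by (meson symD)
        thus ?thesis using True False ac by (auto simp: commw_def)
      next
        case False2: False
        thus ?thesis using False ac by (auto simp: commw_def)
      qed
    qed
  qed
qed

lemma gen_lift:
  assumes cov: "covering_map VL EL VG EG \<phi>"
    and tl: "substloc VG EG VG EG \<tau>"
    and F: "F \<in> hom (raag VL EL) (raag VL EL)"
    and lift: "\<forall>X\<in>carrier (raag VL EL). substH VG EG \<tau> (substH VG EG (\<lambda>a. [(\<phi> a, True)]) X)
                 = substH VG EG (\<lambda>a. [(\<phi> a, True)]) (F X)"
    and a: "a \<in> VL"
  shows "raag_eq VG EG (subst (\<lambda>a. [(\<phi> a, True)]) (rep (F (raag_class VL EL [(a,True)])))) (\<tau> (\<phi> a))"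
proof -
  interpret P: substloc VL EL VG EG "\<lambda>a. [(\<phi> a, True)]" by (rule phi_loc[OF cov])
  interpret T: substloc VG EG VG EG \<tau> by (rule tl)
  have al: "[(a,True)] \<in> lists (VL \<times> UNIV)" using a by simp
  have pa: "\<phi> a \<in> VG" using cov a by (auto simp: covering_map_def)
  have G: "raag_class VL EL [(a,True)] \<in> carrier (raag VL EL)" using al by (rule class_carrier)
  have FG: "F (raag_class VL EL [(a,True)]) \<in> carrier (raag VL EL)" using F G by (simp add: hom_def Pi_def)
  have 1: "substH VG EG (\<lambda>a. [(\<phi> a, True)]) (raag_class VL EL [(a,True)]) = raag_class VG EG [(\<phi> a, True)]"
    using P.H_class[OF al] by (simp add: rho_def)
  have 2: "substH VG EG \<tau> (raag_class VG EG [(\<phi> a, True)]) = raag_class VG EG (\<tau> (\<phi> a))"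
    using T.H_class[of "[(\<phi> a, True)]"] pa by (simp add: rho_def)
  have 3: "substH VG EG \<tau> (substH VG EG (\<lambda>a. [(\<phi> a, True)]) (raag_class VL EL [(a,True)]))
     = substH VG EG (\<lambda>a. [(\<phi> a, True)]) (F (raag_class VL EL [(a,True)]))" using lift G by blast
  have "raag_class VG EG (subst (\<lambda>a. [(\<phi> a, True)]) (rep (F (raag_class VL EL [(a,True)])))) = raag_class VG EG (\<tau> (\<phi> a))"
    using 3 unfolding 1 2 by (simp add: substH_def)
  moreover have "subst (\<lambda>a. [(\<phi> a, True)]) (rep (F (raag_class VL EL [(a,True)]))) \<in> lists (VG \<times> UNIV)"
    using carrier_rep[OF FG] subst_lists[OF P.l] by blast
  ultimately show ?thesis using class_eq_iff by blast
qed



lemma forward: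
  assumes sL: "simplicial_graph VL EL" and sG: "simplicial_graph VG EG"
    and reg: "regular_covering_map VL EL VG EG \<phi>"
    and v: "v \<in> VG" and v': "v' \<in> VG" and vv: "v \<noteq> v'"
    and lkv: "lk EG v \<subseteq> st EG v'"
    and lift: "liftable VL EL VG EG \<phi> (transvection VG EG v v')"
  shows "phi_le VL EL \<phi> v v'"
proof -
  have finL: "finite VL" and ELV: "EL \<subseteq> VL \<times> VL" and symL: "sym EL"
    using sL by (auto simp: simplicial_graph_def)
  have symG: "sym EG" and irrG: "irrefl EG" using sG by (auto simp: simplicial_graph_def)
  have cov: "covering_map VL EL VG EG \<phi>" using reg by (simp add: regular_covering_map_def)
  have img: "\<phi> ` VL = VG" and edge: "\<forall>a b. (a, b) \<in> EL \<longrightarrow> (\<phi> a, \<phi> b) \<in> EG"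
    and bij: "\<forall>a\<in>VL. bij_betw \<phi> (lk EL a) (lk EG (\<phi> a))" using cov by (auto simp: covering_map_def)
  define \<tau> where "\<tau> = (\<lambda>a. if a = v then [(v,True),(v',True)] else [(a,True)])"
  define \<sigma> where "\<sigma> = (\<lambda>a. [(\<phi> a, True)])"
  have tl: "substloc VG EG VG EG \<tau>" unfolding \<tau>_def by (rule tau_loc[OF symG irrG v v' lkv])
  obtain F where F: "F \<in> iso (raag VL EL) (raag VL EL)"
    and lf: "\<forall>X\<in>carrier (raag VL EL). transvection VG EG v v' (induced_hom VG EG \<phi> X) = induced_hom VG EG \<phi> (F X)"
    using lift by (auto simp: liftable_def)
  have Fh: "F \<in> hom (raag VL EL) (raag VL EL)" using F by (simp add: iso_def)
  have lf': "\<forall>X\<in>carrier (raag VL EL). substH VG EG \<tau> (substH VG EG \<sigma> X) = substH VG EG \<sigma> (F X)"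
    using lf by (simp add: transv_subst induced_subst \<tau>_def \<sigma>_def)
  define gen where "gen = (\<lambda>a. raag_class VL EL [(a,True)])"
  have genc: "gen a \<in> carrier (raag VL EL)" if "a \<in> VL" for a
    unfolding gen_def by (rule class_carrier) (use that in simp)
  have Fgen: "F (gen a) \<in> carrier (raag VL EL)" if "a \<in> VL" for a
    using Fh genc[OF that] by (simp add: hom_def Pi_def)
  have repl: "rep (F (gen a)) \<in> lists (VL \<times> UNIV)" if "a \<in> VL" for a
    using carrier_rep[OF Fgen[OF that]] by blast
  have gl: "raag_eq VG EG (subst \<sigma> (rep (F (gen a)))) (\<tau> (\<phi> a))" if "a \<in> VL" for a
    using gen_lift[OF cov tl Fh lf'[unfolded \<sigma>_def] that] unfolding gen_def \<sigma>_def .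
  have cnt_gen: "(\<Sum>b\<in>{b\<in>VL. \<phi> b = t}. cnt (rep (F (gen a))) b) = cnt (\<tau> (\<phi> a)) t" if "a \<in> VL" for a t
    using cnt_push[OF finL repl[OF that], of \<phi> t] cnt_resp[OF gl[OF that], of t] unfolding \<sigma>_def by simp
  obtain u where u: "u \<in> VL" "\<phi> u = v" using img v by auto
  define x where "x = cnt (rep (F (gen u)))"
  define Y where "Y = (\<lambda>w. cnt (rep (F (gen w))))"
  have hx1: "(\<Sum>a\<in>{a\<in>VL. \<phi> a = v}. x a) = 1"
    using cnt_gen[OF u(1), of v] u vv by (simp add: x_def \<tau>_def sgnb_def)
  have hx2: "(\<Sum>a\<in>{a\<in>VL. \<phi> a = v'}. x a) = 1"
    using cnt_gen[OF u(1), of v'] u vv by (simp add: x_def \<tau>_def sgnb_def)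
  have wprops: "w \<in> VL \<and> \<phi> w \<noteq> v \<and> (u, w) \<in> EL" if "w \<in> lk EL u" for w
  proof -
    have uw: "(u, w) \<in> EL" using that by (simp add: lk_def)
    hence "(v, \<phi> w) \<in> EG" using edge u by auto
    hence "\<phi> w \<noteq> v" using irrG by (auto simp: irrefl_def)
    thus ?thesis using uw ELV by auto
  qed
  have hy: "\<forall>w\<in>lk EL u. \<forall>t. (\<Sum>a\<in>{a\<in>VL. \<phi> a = t}. Y w a) = (if t = \<phi> w then 1 else 0)"
  proof (intro ballI allI)
    fix w t assume w: "w \<in> lk EL u"
    show "(\<Sum>a\<in>{a\<in>VL. \<phi> a = t}. Y w a) = (if t = \<phi> w then 1 else 0)"
      using cnt_gen[of w t] wprops[OF w] by (auto simp: Y_def \<tau>_def sgnb_def)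
  qed
  have hc: "\<forall>w\<in>lk EL u. \<forall>a b. a \<noteq> b \<longrightarrow> (a, b) \<notin> EL \<longrightarrow> x a * Y w b = Y w a * x b"
  proof (intro ballI allI impI)
    fix w a b assume w: "w \<in> lk EL u" and ab: "a \<noteq> b" "(a, b) \<notin> EL"
    have wV: "w \<in> VL" and uw: "(u, w) \<in> EL" using wprops[OF w] by auto
    have ul: "[(u,True)] \<in> lists (VL \<times> UNIV)" and wl: "[(w,True)] \<in> lists (VL \<times> UNIV)" using u wV by auto
    have "raag_eq VL EL ([] @ [(u,True),(w,True)] @ []) ([] @ [(w,True),(u,True)] @ [])"
      by (rule raag_eq.commute) (use u wV uw in auto)
    hence "raag_class VL EL ([(u,True)] @ [(w,True)]) = raag_class VL EL ([(w,True)] @ [(u,True)])"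
      by (simp add: class_eq)
    hence "gen u \<otimes>\<^bsub>raag VL EL\<^esub> gen w = gen w \<otimes>\<^bsub>raag VL EL\<^esub> gen u"
      unfolding gen_def using mult_class[OF ul wl] mult_class[OF wl ul] by simp
    hence "F (gen u) \<otimes>\<^bsub>raag VL EL\<^esub> F (gen w) = F (gen w) \<otimes>\<^bsub>raag VL EL\<^esub> F (gen u)"
      using hom_mult[OF Fh genc[OF u(1)] genc[OF wV]] hom_mult[OF Fh genc[OF wV] genc[OF u(1)]] by simp
    hence "raag_class VL EL (rep (F (gen u)) @ rep (F (gen w))) = raag_class VL EL (rep (F (gen w)) @ rep (F (gen u)))"
      by (simp add: raag_def)
    moreover have "rep (F (gen u)) @ rep (F (gen w)) \<in> lists (VL \<times> UNIV)" using repl u wV by simp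
    ultimately have "raag_eq VL EL (rep (F (gen u)) @ rep (F (gen w))) (rep (F (gen w)) @ rep (F (gen u)))"
      using class_eq_iff by blast
    from comm_count[OF this ab symL] show "x a * Y w b = Y w a * x b" by (simp add: x_def Y_def)
  qed
  obtain u0 u1 where uu: "u0 \<in> VL" "u1 \<in> VL" "\<phi> u0 = v" "\<phi> u1 = v'" "lk EL u0 \<subseteq> st EL u1"
    using key[OF finL irrG edge bij ELV u vv hx1 hx2 hy hc] by blast
  show ?thesis unfolding phi_le_def
  proof (intro ballI impI)
    fix w assume "w \<in> VL" "\<phi> w = v"
    thus "\<exists>u'\<in>VL. \<phi> u' = v' \<and> lk EL w \<subseteq> st EL u'"
      using deck_transfer[OF ELV reg uu(1) uu(2) uu(5), of w] uu by auto
  qed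
qed


lemma backward:
  assumes sL: "simplicial_graph VL EL" and sG: "simplicial_graph VG EG"
    and reg: "regular_covering_map VL EL VG EG \<phi>"
    and v: "v \<in> VG" and v': "v' \<in> VG" and vv: "v \<noteq> v'"
    and lkv: "lk EG v \<subseteq> st EG v'"
    and le: "phi_le VL EL \<phi> v v'"
  shows "liftable VL EL VG EG \<phi> (transvection VG EG v v')"
proof -
  have finL: "finite VL" and ELV: "EL \<subseteq> VL \<times> VL" and symL: "sym EL"
    using sL by (auto simp: simplicial_graph_def)
  have symG: "sym EG" and irrG: "irrefl EG" using sG by (auto simp: simplicial_graph_def)
  have cov: "covering_map VL EL VG EG \<phi>" using reg by (simp add: regular_covering_map_def)
  have img: "\<phi> ` VL = VG" and edge: "\<forall>a b. (a, b) \<in> EL \<longrightarrow> (\<phi> a, \<phi> b) \<in> EG"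
    using cov by (auto simp: covering_map_def)
  define g where "g = (\<lambda>u. SOME u'. u' \<in> VL \<and> \<phi> u' = v' \<and> lk EL u \<subseteq> st EL u')"
  have gp: "g u \<in> VL \<and> \<phi> (g u) = v' \<and> lk EL u \<subseteq> st EL (g u)" if "u \<in> VL" "\<phi> u = v" for u
  proof -
    have "\<exists>u'. u' \<in> VL \<and> \<phi> u' = v' \<and> lk EL u \<subseteq> st EL u'" using le that by (auto simp: phi_le_def)
    thus ?thesis unfolding g_def by (rule someI_ex)
  qed
  define Uv where "Uv = (\<lambda>a. a \<in> VL \<and> \<phi> a = v)"
  define \<sigma> where "\<sigma> = (\<lambda>a. if Uv a then [(a,True),(g a,True)] else [(a,True)])"
  define \<sigma>' where "\<sigma>' = (\<lambda>a. if Uv a then [(a,True),(g a,False)] else [(a,True)])"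
  define S where "S = (\<lambda>a. if Uv a then {a, g a} else {a})"
  have fs: "fst ` set (\<sigma> a) = S a" "fst ` set (\<sigma>' a) = S a" for a
    by (auto simp: \<sigma>_def \<sigma>'_def S_def)
  have gU: "\<not> Uv (g a)" if "Uv a" for a using gp[of a] that vv by (auto simp: Uv_def)
  have cS: "commw EL (S a) (S c)" if ac: "(a, c) \<in> EL" "a \<in> VL" "c \<in> VL" for a c
  proof -
    have "\<not> (Uv a \<and> Uv c)"
    proof
      assume "Uv a \<and> Uv c"
      moreover have "(\<phi> a, \<phi> c) \<in> EG" using edge ac(1) by blast
      ultimately have "(v, v) \<in> EG" by (simp add: Uv_def)
      thus False using irrG by (auto simp: irrefl_def)
    qed
    moreover have ca: "(c, a) \<in> EL" using ac symL by (meson symD)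
    moreover {
      assume "Uv a"
      hence "c = g a \<or> (g a, c) \<in> EL" using gp[of a] ac by (auto simp: Uv_def lk_def st_def)
    }
    moreover {
      assume "Uv c"
      hence "a = g c \<or> (g c, a) \<in> EL" using gp[of c] ca by (auto simp: Uv_def lk_def st_def)
      hence "a = g c \<or> (a, g c) \<in> EL" using symL by (meson symD)
    }
    ultimately show ?thesis using ac by (auto simp: commw_def S_def)
  qed
  have lS: "\<forall>a\<in>VL. \<sigma> a \<in> lists (VL \<times> UNIV)" "\<forall>a\<in>VL. \<sigma>' a \<in> lists (VL \<times> UNIV)"
    using gp by (auto simp: \<sigma>_def \<sigma>'_def Uv_def)
  interpret Fl: substloc VL EL VL EL \<sigma>
    by unfold_locales (use lS cS in \<open>auto simp: fs\<close>)
  interpret Gl: substloc VL EL VL EL \<sigma>'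
    by unfold_locales (use lS cS in \<open>auto simp: fs\<close>)
  define F where "F = substH VL EL \<sigma>"
  define G where "G = substH VL EL \<sigma>'"
  have id1: "\<forall>a\<in>VL. raag_eq VL EL (subst \<sigma>' (\<sigma> a)) [(a,True)]"
  proof
    fix a assume a: "a \<in> VL"
    show "raag_eq VL EL (subst \<sigma>' (\<sigma> a)) [(a,True)]"
    proof (cases "Uv a")
      case True
      have ga: "g a \<in> VL" using gp[of a] True by (auto simp: Uv_def)
      have "raag_eq VL EL ([(a,True)] @ [(g a, False), (g a, \<not> False)] @ []) ([(a,True)] @ [])"
        by (rule raag_eq.cancel) (use a ga in auto)
      thus ?thesis using True gU[OF True] by (simp add: \<sigma>_def \<sigma>'_def rho_def)
    next
      case False thus ?thesis using a by (simp add: \<sigma>_def \<sigma>'_def rho_def)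
    qed
  qed
  have id2: "\<forall>a\<in>VL. raag_eq VL EL (subst \<sigma> (\<sigma>' a)) [(a,True)]"
  proof
    fix a assume a: "a \<in> VL"
    show "raag_eq VL EL (subst \<sigma> (\<sigma>' a)) [(a,True)]"
    proof (cases "Uv a")
      case True
      have ga: "g a \<in> VL" using gp[of a] True by (auto simp: Uv_def)
      have "raag_eq VL EL ([(a,True)] @ [(g a, True), (g a, \<not> True)] @ []) ([(a,True)] @ [])"
        by (rule raag_eq.cancel) (use a ga in auto)
      thus ?thesis using True gU[OF True] by (simp add: \<sigma>_def \<sigma>'_def rho_def)
    next
      case False thus ?thesis using a by (simp add: \<sigma>_def \<sigma>'_def rho_def)
    qed
  qed
  have GF: "G (F X) = X" if X: "X \<in> carrier (raag VL EL)" for X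
  proof -
    have w: "rep X \<in> lists (VL \<times> UNIV)" and Xw: "raag_class VL EL (rep X) = X" using carrier_rep[OF X] by auto
    have "G (F X) = raag_class VL EL (subst \<sigma>' (subst \<sigma> (rep X)))"
      unfolding F_def G_def using Gl.H_class[OF subst_lists[OF Fl.l w]] by (simp add: substH_def)
    also have "\<dots> = raag_class VL EL (rep X)"
      unfolding subst_comp by (rule class_eq[OF subst_id[OF id1 w]])
    finally show ?thesis using Xw by simp
  qed
  have FG: "F (G X) = X" if X: "X \<in> carrier (raag VL EL)" for X
  proof -
    have w: "rep X \<in> lists (VL \<times> UNIV)" and Xw: "raag_class VL EL (rep X) = X" using carrier_rep[OF X] by auto
    have "F (G X) = raag_class VL EL (subst \<sigma> (subst \<sigma>' (rep X)))"
      unfolding F_def G_def using Fl.H_class[OF subst_lists[OF Gl.l w]] by (simp add: substH_def)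
    also have "\<dots> = raag_class VL EL (rep X)"
      unfolding subst_comp by (rule class_eq[OF subst_id[OF id2 w]])
    finally show ?thesis using Xw by simp
  qed
  have Fh: "F \<in> hom (raag VL EL) (raag VL EL)" unfolding F_def by (rule Fl.H_hom)
  have bij: "bij_betw F (carrier (raag VL EL)) (carrier (raag VL EL))"
    by (rule bij_betw_byWitness[where f' = G]) (use GF FG Fl.H_carrier Gl.H_carrier in \<open>auto simp: F_def G_def\<close>)
  define \<tau> where "\<tau> = (\<lambda>a. if a = v then [(v,True),(v',True)] else [(a,True)])"
  define \<sigma>\<phi> where "\<sigma>\<phi> = (\<lambda>a. [(\<phi> a, True)])"
  interpret Tl: substloc VG EG VG EG \<tau> unfolding \<tau>_def by (rule tau_loc[OF symG irrG v v' lkv])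
  interpret Pl: substloc VL EL VG EG \<sigma>\<phi> unfolding \<sigma>\<phi>_def by (rule phi_loc[OF cov])
  have liftX: "transvection VG EG v v' (induced_hom VG EG \<phi> X) = induced_hom VG EG \<phi> (F X)"
    if X: "X \<in> carrier (raag VL EL)" for X
  proof -
    have w: "rep X \<in> lists (VL \<times> UNIV)" using carrier_rep[OF X] by auto
    have pw: "subst \<sigma>\<phi> (rep X) \<in> lists (VG \<times> UNIV)" by (rule subst_lists[OF Pl.l w])
    have sw: "subst \<sigma> (rep X) \<in> lists (VL \<times> UNIV)" by (rule subst_lists[OF Fl.l w])
    have "transvection VG EG v v' (induced_hom VG EG \<phi> X) = raag_class VG EG (subst \<tau> (subst \<sigma>\<phi> (rep X)))"
      unfolding transv_subst induced_subst \<tau>_def[symmetric] \<sigma>\<phi>_def[symmetric]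
      using Tl.H_class[OF pw] by (simp add: substH_def)
    moreover have "induced_hom VG EG \<phi> (F X) = raag_class VG EG (subst \<sigma>\<phi> (subst \<sigma> (rep X)))"
      unfolding induced_subst \<sigma>\<phi>_def[symmetric] F_def
      using Pl.H_class[OF sw] by (simp add: substH_def)
    moreover have "subst \<tau> (subst \<sigma>\<phi> (rep X)) = subst \<sigma>\<phi> (subst \<sigma> (rep X))"
      unfolding subst_comp
    proof (rule subst_cong, rule ballI)
      fix a assume "a \<in> fst ` set (rep X)"
      hence a: "a \<in> VL" using w by auto
      show "subst \<tau> (\<sigma>\<phi> a) = subst \<sigma>\<phi> (\<sigma> a)"
        using gp[of a] a by (auto simp: \<tau>_def \<sigma>\<phi>_def \<sigma>_def Uv_def rho_def)
    qed
    ultimately show ?thesis by simp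
  qed
  show ?thesis unfolding liftable_def
    using Fh bij liftX by (auto simp: iso_def)
qed


theorem corollary8p4:
  fixes VL :: "'b set" and EL :: "('b \<times> 'b) set"
    and VG :: "'a set" and EG :: "('a \<times> 'a) set"
    and \<phi> :: "'b \<Rightarrow> 'a" and v v' :: 'a
  assumes "simplicial_graph VL EL" and "no_isolated_vertices VL EL"
    and "simplicial_graph VG EG" and "no_isolated_vertices VG EG"
    and "regular_covering_map VL EL VG EG \<phi>"
    and "v \<in> VG" and "v' \<in> VG" and "v \<noteq> v'"
    and "lk EG v \<subseteq> st EG v'"
  shows "liftable VL EL VG EG \<phi> (transvection VG EG v v') \<longleftrightarrow> phi_le VL EL \<phi> v v'"
  using forward[OF assms(1,3,5,6,7,8,9)] backward[OF assms(1,3,5,6,7,8,9)] by blast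

end
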